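(* Let $m\le k\le n$ be positive integers, $\epsilon\in(0,1)$ with $k\ge\frac{4m}{\epsilon}+\frac{12}{\epsilon^2}\log(\frac1\epsilon)$, $\mathbf a_1,\dots,\mathbf a_n\in\mathbb R^m$, and $w^*=\max\{[\det(\sum_{i\in S}\mathbf a_i\mathbf a_i^\top)]^{1/m}: S\subseteq[n],|S|=k\}$. Let $(\hat{\mathbf x},\hat w)$ be an optimal solution of the convex relaxation $\max\{w: w\le[\det(\sum_{i\in[n]}x_i\mathbf a_i\mathbf a_i^\top)]^{1/m},\ \sum_ix_i=k,\ \mathbf x\in[0,1]^n\}$. Consider the randomized algorithm: repeatedly sample a set $\mathcal S\subseteq[n]$ by including each $i\in[n]$ independently with probability $\frac{\hat x_i}{1+\epsilon}$, until $|\mathcal S|\le k$; then, while $|\mathcal S|<k$, add to $\mathcal S$ an element $j^*\in\arg\max_{j\in[n]\setminus\mathcal S}[\det(\sum_{i\in\mathcal S}\mathbf a_i\mathbf a_i^\top+\mathbf a_j\mathbf a_j^\top)]^{1/m}$; output $\mathcal S$. Then the output (a set of size $k$) satisfies $$\Big\{\mathbb E\Big[\det\Big(\sum_{i\in\mathcal S}\mathbf a_i\mathbf a_i^\top\Big)\Big]\Big\}^{1/m}\ge(1-\epsilon)\,w^*,$$ i.e. the algorithm is a $(1-\epsilon)$-approximation for the $D$-optimal design problem.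
   Context: $[n]=\{1,\dots,n\}$; $\log$ is the natural logarithm. This is the $D$-optimal design problem without repetitions. *)

theory Defs
  imports "HOL-Analysis.Analysis" "HOL-Probability.Probability"
begin

definition outer :: "real^'m \<Rightarrow> real^'m^'m" where
  "outer v = (\<chi> r c. v $ r * v $ c)"

definition gram :: "(nat \<Rightarrow> real^'m) \<Rightarrow> nat set \<Rightarrow> real^'m^'m" where
  "gram a S = (\<Sum>i\<in>S. outer (a i))"

definition dobj :: "(nat \<Rightarrow> real^'m) \<Rightarrow> nat set \<Rightarrow> real" where
  "dobj a S = det (gram a S) powr (1 / real CARD('m))"

definition wstar :: "(nat \<Rightarrow> real^'m) \<Rightarrow> nat \<Rightarrow> nat \<Rightarrow> real" where
  "wstar a n k = Max {dobj a S | S. S \<subseteq> {1..n} \<and> card S = k}"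

definition relax_feasible :: "(nat \<Rightarrow> real^'m) \<Rightarrow> nat \<Rightarrow> nat \<Rightarrow> (nat \<Rightarrow> real) \<Rightarrow> real \<Rightarrow> bool" where
  "relax_feasible a n k x w \<longleftrightarrow>
     w \<le> det (\<Sum>i\<in>{1..n}. x i *\<^sub>R outer (a i)) powr (1 / real CARD('m)) \<and>
     (\<Sum>i\<in>{1..n}. x i) = real k \<and> (\<forall>i\<in>{1..n}. 0 \<le> x i \<and> x i \<le> 1)"

definition relax_optimal :: "(nat \<Rightarrow> real^'m) \<Rightarrow> nat \<Rightarrow> nat \<Rightarrow> (nat \<Rightarrow> real) \<Rightarrow> real \<Rightarrow> bool" where
  "relax_optimal a n k x w \<longleftrightarrow> relax_feasible a n k x w \<and>
     (\<forall>x' w'. relax_feasible a n k x' w' \<longrightarrow> w' \<le> w)"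

definition indep_sample :: "nat \<Rightarrow> (nat \<Rightarrow> real) \<Rightarrow> nat set pmf" where
  "indep_sample n p = map_pmf (\<lambda>f. {i. f i}) (Pi_pmf {1..n} False (\<lambda>i. bernoulli_pmf (p i)))"

text \<open>Repeat sampling until |S| <= k: the resulting distribution is the
  conditional distribution given |S| <= k.\<close>
definition rejection_sample :: "nat \<Rightarrow> nat \<Rightarrow> (nat \<Rightarrow> real) \<Rightarrow> nat set pmf" where
  "rejection_sample n k p = cond_pmf (indep_sample n p) {S. card S \<le> k}"

text \<open>Valid greedy selection rule (arbitrary tie-breaking):
  for |T| < k, returns j* in argmax_{j in [n]\T} dobj (T + j).\<close>
definition greedy_rule :: "(nat \<Rightarrow> real^'m) \<Rightarrow> nat \<Rightarrow> nat \<Rightarrow> (nat set \<Rightarrow> nat) \<Rightarrow> bool" where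
  "greedy_rule a n k sel \<longleftrightarrow>
     (\<forall>T. T \<subseteq> {1..n} \<and> card T < k \<longrightarrow>
        sel T \<in> {1..n} - T \<and>
        (\<forall>j\<in>{1..n} - T. dobj a (insert j T) \<le> dobj a (insert (sel T) T)))"

definition greedy_complete :: "(nat set \<Rightarrow> nat) \<Rightarrow> nat \<Rightarrow> nat set \<Rightarrow> nat set" where
  "greedy_complete sel k S = ((\<lambda>T. insert (sel T) T) ^^ (k - card S)) S"

definition algorithm_output ::
  "nat \<Rightarrow> nat \<Rightarrow> real \<Rightarrow> (nat \<Rightarrow> real) \<Rightarrow> (nat set \<Rightarrow> nat) \<Rightarrow> nat set pmf" where
  "algorithm_output n k \<epsilon> x sel =
     map_pmf (greedy_complete sel k) (rejection_sample n k (\<lambda>i. x i / (1 + \<epsilon>)))"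

end

theory Submission
  imports Defs
begin


definition Kc :: "(nat \<Rightarrow> real^'m) \<Rightarrow> ('m \<Rightarrow> nat) \<Rightarrow> real" where
  "Kc a g = (\<Prod>r\<in>UNIV. a (g r) $ r) * det (\<chi> r. a (g r))"

definition Cc :: "(nat \<Rightarrow> real^'m) \<Rightarrow> nat set \<Rightarrow> real" where
  "Cc a T = (\<Sum>g\<in>{g::'m \<Rightarrow> nat. range g = T}. Kc a g)"

lemma Kc_noninj: "\<not> inj (g::'m::finite \<Rightarrow> nat) \<Longrightarrow> Kc a g = 0"
proof -
  assume "\<not> inj g"
  then obtain i j where ij: "i \<noteq> j" "g i = g j" unfolding inj_def by blast
  have "det (\<chi> r. a (g r)) = 0"
    by (rule det_identical_rows[OF ij(1)]) (simp add: row_def ij(2))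
  thus ?thesis by (simp add: Kc_def)
qed

lemma finite_funs: "finite (S::'b set) \<Longrightarrow> finite {g::'m::finite \<Rightarrow> 'b. \<forall>r. g r \<in> S}"
proof -
  assume "finite S"
  have "{g::'m \<Rightarrow> 'b. \<forall>r. g r \<in> S} = PiE UNIV (\<lambda>_. S)" by (auto simp: PiE_def Pi_def)
  thus ?thesis using \<open>finite S\<close> by (simp add: finite_PiE)
qed

lemma det_expand:
  fixes a :: "nat \<Rightarrow> real^'m::finite"
  assumes "finite I"
  shows "det (\<Sum>i\<in>I. x i *\<^sub>R outer (a i)) =
     (\<Sum>g\<in>{g::'m\<Rightarrow>nat. \<forall>r. g r \<in> I}. (\<Prod>r\<in>UNIV. x (g r)) * Kc a g)"
proof -
  have PE: "PiE UNIV (\<lambda>_. I) = {g::'m\<Rightarrow>nat. \<forall>r. g r \<in> I}" by (auto simp: PiE_def Pi_def)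
  have M: "(\<Sum>i\<in>I. x i *\<^sub>R outer (a i)) $ r $ c = (\<Sum>i\<in>I. x i * a i $ r * a i $ c)" for r c
    by (simp add: outer_def sum_component mult.assoc)
  have "det (\<Sum>i\<in>I. x i *\<^sub>R outer (a i)) =
     (\<Sum>p\<in>{p. p permutes (UNIV::'m set)}. of_int (sign p) *
        (\<Sum>g\<in>{g::'m\<Rightarrow>nat. \<forall>r. g r \<in> I}. \<Prod>r\<in>UNIV. x (g r) * a (g r) $ r * a (g r) $ p r))"
    unfolding det_def M by (simp add: prod_sum_PiE assms PE)
  also have "\<dots> = (\<Sum>g\<in>{g::'m\<Rightarrow>nat. \<forall>r. g r \<in> I}. \<Sum>p\<in>{p. p permutes (UNIV::'m set)}.
        ((\<Prod>r\<in>UNIV. x (g r)) * (\<Prod>r\<in>UNIV. a (g r) $ r)) * (of_int (sign p) * (\<Prod>r\<in>UNIV. a (g r) $ p r)))"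
    by (subst sum.swap) (simp add: sum_distrib_left prod.distrib mult_ac)
  also have "\<dots> = (\<Sum>g\<in>{g::'m\<Rightarrow>nat. \<forall>r. g r \<in> I}. (\<Prod>r\<in>UNIV. x (g r)) * Kc a g)"
    by (simp add: Kc_def det_def sum_distrib_left[symmetric] mult.assoc)
  finally show ?thesis .
qed

lemma Cc_zero: "card T \<noteq> CARD('m) \<Longrightarrow> Cc (a :: nat \<Rightarrow> real^'m::finite) T = 0"
proof -
  assume c: "card T \<noteq> CARD('m)"
  have "Kc a g = 0" if "range g = T" for g :: "'m \<Rightarrow> nat"
  proof (rule Kc_noninj)
    show "\<not> inj g" using c that card_image[of g UNIV] by auto
  qed
  thus ?thesis unfolding Cc_def by simp
qed

lemma CB:
  fixes a :: "nat \<Rightarrow> real^'m::finite"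
  assumes "finite I"
  shows "det (\<Sum>i\<in>I. x i *\<^sub>R outer (a i)) =
     (\<Sum>T\<in>{T. T \<subseteq> I \<and> card T = CARD('m)}. (\<Prod>i\<in>T. x i) * Cc a T)"
proof -
  let ?F = "{g::'m\<Rightarrow>nat. \<forall>r. g r \<in> I}"
  have fF: "finite ?F" using finite_funs[OF assms] .
  have 1: "(\<Prod>r\<in>UNIV. x (g r)) * Kc a g = (\<Prod>i\<in>range g. x i) * Kc a g" for g :: "'m \<Rightarrow> nat"
  proof (cases "inj g")
    case True thus ?thesis by (simp add: prod.reindex)
  next
    case False thus ?thesis by (simp add: Kc_noninj)
  qed
  have "det (\<Sum>i\<in>I. x i *\<^sub>R outer (a i)) = (\<Sum>g\<in>?F. (\<Prod>i\<in>range g. x i) * Kc a g)"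
    unfolding det_expand[OF assms] 1 ..
  also have "\<dots> = (\<Sum>T\<in>Pow I. \<Sum>g\<in>{g\<in>?F. range g = T}. (\<Prod>i\<in>range g. x i) * Kc a g)"
    by (rule sum.group[symmetric]) (use fF assms in auto)
  also have "\<dots> = (\<Sum>T\<in>Pow I. (\<Prod>i\<in>T. x i) * Cc a T)"
  proof (rule sum.cong[OF refl])
    fix T assume "T \<in> Pow I"
    hence "{g\<in>?F. range g = T} = {g. range g = T}" by auto
    thus "(\<Sum>g\<in>{g\<in>?F. range g = T}. (\<Prod>i\<in>range g. x i) * Kc a g) = (\<Prod>i\<in>T. x i) * Cc a T"
      by (simp add: Cc_def sum_distrib_left)
  qed
  also have "\<dots> = (\<Sum>T\<in>{T. T \<subseteq> I \<and> card T = CARD('m)}. (\<Prod>i\<in>T. x i) * Cc a T)"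
    by (rule sum.mono_neutral_right) (use assms Cc_zero in auto)
  finally show ?thesis .
qed

lemma gram_CB:
  fixes a :: "nat \<Rightarrow> real^'m::finite"
  assumes "finite I"
  shows "det (gram a I) = (\<Sum>T\<in>{T. T \<subseteq> I \<and> card T = CARD('m)}. Cc a T)"
  using CB[OF assms, of "\<lambda>_. 1" a] by (simp add: gram_def)

lemma det_gram_sq:
  fixes a :: "nat \<Rightarrow> real^'m::finite"
  assumes "finite T" "card T = CARD('m)"
  shows "det (gram a T) \<ge> 0"
proof -
  obtain g :: "'m \<Rightarrow> nat" where g: "bij_betw g UNIV T"
    using finite_same_card_bij[of "UNIV::'m set" T] assms by auto
  define B where "B = (\<chi> r. a (g r))"
  have "gram a T = (\<Sum>r\<in>UNIV. outer (a (g r)))"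
    unfolding gram_def using sum.reindex_bij_betw[OF g, of "\<lambda>i. outer (a i)"] by simp
  also have "\<dots> = transpose B ** B"
    by (simp add: vec_eq_iff outer_def sum_component matrix_matrix_mult_def transpose_def B_def)
  finally have "det (gram a T) = det B * det B" by (simp add: det_mul)
  thus ?thesis by simp
qed

lemma Cc_nonneg:
  fixes a :: "nat \<Rightarrow> real^'m::finite"
  assumes "finite T"
  shows "Cc a T \<ge> 0"
proof (cases "card T = CARD('m)")
  case False thus ?thesis by (simp add: Cc_zero)
next
  case True
  have "{T'. T' \<subseteq> T \<and> card T' = CARD('m)} = {T}"
    using True assms card_subset_eq[of T] by auto
  hence "det (gram a T) = Cc a T" using gram_CB[OF assms, of a] by simp
  thus ?thesis using det_gram_sq[OF assms True, of a] by simp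
qed




lemma ln_lower: fixes e :: real assumes "0 \<le> e" shows "2 * e / (2 + e) \<le> ln (1 + e)"
proof -
  let ?f = "\<lambda>x::real. ln (1 + x) - 2 * x / (2 + x)"
  have "?f 0 \<le> ?f e"
  proof (rule DERIV_nonneg_imp_nondecreasing[OF assms])
    fix x :: real assume xa: "0 \<le> x" "x \<le> e"
    hence x: "0 \<le> x \<and> x \<le> e" by simp
    have d: "DERIV ?f x :> (1 / (1 + x) - (2 * (2 + x) - 2 * x) / (2 + x)^2)"
      using x by (auto intro!: derivative_eq_intros simp: power2_eq_square)
    have x1: "0 < 1 + x" "0 < 2 + x" using x by auto
    have "(2 * (2 + x) - 2 * x) / (2 + x)^2 \<le> 1 / (1 + x)"
      using x1 by (simp add: divide_simps power2_eq_square) (simp add: algebra_simps)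
    hence "0 \<le> 1 / (1 + x) - (2 * (2 + x) - 2 * x) / (2 + x)^2" by simp
    thus "\<exists>y. DERIV ?f x :> y \<and> 0 \<le> y" using d by blast
  qed
  thus ?thesis by simp
qed

lemma chernoff_num:
  fixes e :: real and k m :: nat
  assumes e: "0 < e" "e < 1" and mk: "m \<le> k"
    and kb: "real k \<ge> 4 * real m / e + 12 / e^2 * ln (1 / e)"
  shows "exp (e * k / (1 + e)) / (1 + e) ^ (k - m) \<le> e^2"
proof -
  define L where "L = ln (1 / e)"
  have L0: "L \<ge> 0" using e by (simp add: L_def)
  have lnL: "ln e = - L" using e by (simp add: L_def ln_div)
  have l1: "ln (1 + e) \<ge> 2 * e / (2 + e)" using ln_lower e by simp
  have l2: "ln (1 + e) \<ge> 2 * e / 3"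
  proof -
    have "2 * e / 3 \<le> 2 * e / (2 + e)" using e by (intro divide_left_mono) auto
    thus ?thesis using l1 by linarith
  qed
  have l3: "(1 - e/4) * ln (1 + e) \<ge> e / (1 + e)"
  proof -
    have "e / (1 + e) \<le> (1 - e/4) * (2 * e / (2 + e))"
      using e by (simp add: field_simps)
    also have "\<dots> \<le> (1 - e/4) * ln (1 + e)" using l1 e by (intro mult_left_mono) auto
    finally show ?thesis .
  qed
  have mb: "real m \<le> e * k / 4 - 3 * L / e"
  proof -
    have "e / 4 * real k \<ge> e / 4 * (4 * real m / e + 12 / e^2 * L)"
      using kb e by (intro mult_left_mono) (auto simp: L_def)
    also have "e / 4 * (4 * real m / e + 12 / e^2 * L) = real m + 3 * L / e"
      using e by (simp add: field_simps power2_eq_square)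
    finally show ?thesis by (simp add: field_simps)
  qed
  have lp: "ln (1 + e) > 0" using e by simp
  have km: "real (k - m) \<ge> real k * (1 - e/4) + 3 * L / e" using mb mk by (simp add: of_nat_diff field_simps)
  have A: "(real k * (1 - e/4) + 3 * L / e) * ln (1 + e) \<le> real (k - m) * ln (1 + e)"
    using km lp by (intro mult_right_mono) auto
  have B: "(real k * (1 - e/4) + 3 * L / e) * ln (1 + e) = real k * ((1 - e/4) * ln (1 + e)) + 3 * L * (ln (1 + e) / e)"
    using e by (simp add: field_simps)
  have C: "real k * (e / (1 + e)) + 3 * L * (2 / 3) \<le> real k * ((1 - e/4) * ln (1 + e)) + 3 * L * (ln (1 + e) / e)"
  proof (intro add_mono mult_left_mono)
    show "e / (1 + e) \<le> (1 - e / 4) * ln (1 + e)" by (rule l3)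
    show "2 / 3 \<le> ln (1 + e) / e" using l2 e by (simp add: field_simps)
  qed (use L0 in auto)
  have key: "e * k / (1 + e) - real (k - m) * ln (1 + e) \<le> 2 * ln e"
  proof -
    have "e * k / (1 + e) = real k * (e / (1 + e))" by simp
    thus ?thesis using A B C lnL by linarith
  qed
  have "(1 + e) ^ (k - m) = exp (real (k - m) * ln (1 + e))"
    using e by (simp add: exp_of_nat_mult)
  hence "exp (e * k / (1 + e)) / (1 + e) ^ (k - m) = exp (e * k / (1 + e) - real (k - m) * ln (1 + e))"
    by (simp add: exp_diff)
  also have "\<dots> \<le> exp (2 * ln e)" using key by simp
  also have "\<dots> = exp (ln e + ln e)" by (simp only: mult_2)
  also have "\<dots> = e^2" using e by (simp only: exp_add exp_ln power2_eq_square)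
  finally show ?thesis .
qed



lemma set_indep: "set_pmf (indep_sample n p) \<subseteq> Pow {1..n}"
proof -
  have "set_pmf (Pi_pmf {1..n} False (\<lambda>i. bernoulli_pmf (p i))) \<subseteq> {f. \<forall>x. x \<notin> {1..n} \<longrightarrow> f x = False}"
    by (rule set_Pi_pmf_subset) simp
  thus ?thesis unfolding indep_sample_def by (auto simp del: atLeastAtMost_iff)
qed

lemma E_indep:
  fixes p :: "nat \<Rightarrow> real" and c :: real
  assumes T: "T \<subseteq> {1..n}" and p: "\<And>i. i \<in> {1..n} \<Longrightarrow> 0 \<le> p i \<and> p i \<le> 1" and c: "0 \<le> c"
  shows "measure_pmf.expectation (indep_sample n p) (\<lambda>S. if T \<subseteq> S then c ^ card (S - T) else 0)
    = (\<Prod>i\<in>T. p i) * (\<Prod>i\<in>{1..n} - T. c * p i + (1 - p i))"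
proof -
  let ?N = "{1..n}"
  let ?Pi = "Pi_pmf ?N False (\<lambda>i. bernoulli_pmf (p i))"
  define v where "v i b = (if i \<in> T then (if b then 1 else 0) else (if b then c else 1::real))" for i b
  have pw: "(if T \<subseteq> {i. f i} then c ^ card ({i. f i} - T) else 0) = (\<Prod>i\<in>?N. v i (f i))"
    if f: "f \<in> set_pmf ?Pi" for f
  proof -
    have fo: "\<And>x. x \<notin> ?N \<Longrightarrow> f x = False" using set_Pi_pmf_subset[of ?N False] f by auto
    have "(\<Prod>i\<in>?N. v i (f i)) = (\<Prod>i\<in>?N - T. v i (f i)) * (\<Prod>i\<in>T. v i (f i))"
      using prod.subset_diff[OF T, of "\<lambda>i. v i (f i)"] by simp
    also have "(\<Prod>i\<in>T. v i (f i)) = (\<Prod>i\<in>T. (if f i then 1 else 0))"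
      by (rule prod.cong) (auto simp: v_def)
    also have "\<dots> = (if T \<subseteq> {i. f i} then 1 else 0)"
    proof (cases "T \<subseteq> {i. f i}")
      case True thus ?thesis by (auto intro!: prod.neutral)
    next
      case False
      then obtain j where "j \<in> T" "\<not> f j" by auto
      thus ?thesis using False T finite_subset[OF T] by (auto intro!: prod_zero[of T] bexI[of _ j])
    qed
    also have "(\<Prod>i\<in>?N - T. v i (f i)) = (\<Prod>i\<in>?N - T. (if f i then c else 1))"
      by (rule prod.cong) (auto simp: v_def)
    also have "\<dots> = (\<Prod>i\<in>{i\<in>?N - T. f i}. c)"
      by (rule prod.inter_filter[symmetric]) simp
    also have "{i\<in>?N - T. f i} = {i. f i} - T" using fo by auto
    finally show ?thesis by auto
  qed
  have "measure_pmf.expectation (indep_sample n p) (\<lambda>S. if T \<subseteq> S then c ^ card (S - T) else 0)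
      = measure_pmf.expectation ?Pi (\<lambda>f. if T \<subseteq> {i. f i} then c ^ card ({i. f i} - T) else 0)"
    unfolding indep_sample_def by simp
  also have "\<dots> = measure_pmf.expectation ?Pi (\<lambda>f. \<Prod>i\<in>?N. v i (f i))"
    by (intro integral_cong_AE AE_pmfI) (auto simp: pw)
  also have "\<dots> = (\<Prod>i\<in>?N. measure_pmf.expectation (bernoulli_pmf (p i)) (v i))"
    by (rule expectation_prod_Pi_pmf) (auto simp: integrable_measure_pmf_finite v_def c)
  also have "\<dots> = (\<Prod>i\<in>?N. v i True * p i + v i False * (1 - p i))"
    by (rule prod.cong) (use p in auto)
  also have "\<dots> = (\<Prod>i\<in>?N - T. v i True * p i + v i False * (1 - p i)) * (\<Prod>i\<in>T. v i True * p i + v i False * (1 - p i))"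
    using prod.subset_diff[OF T] by simp
  also have "\<dots> = (\<Prod>i\<in>?N - T. c * p i + (1 - p i)) * (\<Prod>i\<in>T. p i)"
    by (intro arg_cong2[where f="(*)"] prod.cong) (auto simp: v_def)
  finally show ?thesis by simp
qed




lemma greedy_ok:
  assumes g: "greedy_rule a n k sel" and S: "S \<subseteq> {1..n}" and Sk: "card S \<le> k"
  shows "greedy_complete sel k S \<subseteq> {1..n} \<and> card (greedy_complete sel k S) = k \<and> S \<subseteq> greedy_complete sel k S"
proof -
  let ?F = "\<lambda>T. insert (sel T) T"
  have "j \<le> k - card S \<Longrightarrow> (?F ^^ j) S \<subseteq> {1..n} \<and> card ((?F ^^ j) S) = card S + j \<and> S \<subseteq> (?F ^^ j) S" for j
  proof (induction j)
    case 0 thus ?case using S by simp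
  next
    case (Suc j)
    let ?T = "(?F ^^ j) S"
    from Suc have IH: "?T \<subseteq> {1..n}" "card ?T = card S + j" "S \<subseteq> ?T" by auto
    have lt: "card ?T < k" using IH(2) Suc.prems by simp
    have sT: "sel ?T \<in> {1..n} - ?T" using g IH(1) lt unfolding greedy_rule_def by blast
    have fin: "finite ?T" using IH(1) finite_subset by blast
    show ?case using IH sT fin by auto
  qed
  from this[of "k - card S"] Sk show ?thesis unfolding greedy_complete_def by simp
qed

lemma rootpow: assumes "0 \<le> (W::real)" "0 < m" shows "(W ^ m) powr (1 / real m) = W"
proof (cases "W = 0")
  case True thus ?thesis using assms by simp
next
  case False
  note assms
  hence W: "0 < W" using False by simp
  have "(W ^ m) powr (1 / real m) = (W powr real m) powr (1 / real m)" using W by (simp add: powr_realpow)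
  also have "\<dots> = W" using \<open>0 < m\<close> W by (simp add: powr_powr)
  finally show ?thesis .
qed

lemma pow_le_of_powr: "0 \<le> (w::real) \<Longrightarrow> 0 \<le> D \<Longrightarrow> 0 < m \<Longrightarrow> w \<le> D powr (1 / real m) \<Longrightarrow> w ^ m \<le> D"
proof -
  assume w: "0 \<le> w" and D: "0 \<le> D" and m: "0 < m" and le: "w \<le> D powr (1 / real m)"
  have "w ^ m \<le> (D powr (1 / real m)) ^ m" using w le by (intro power_mono) auto
  also have "\<dots> = D"
  proof (cases "D = 0")
    case True thus ?thesis using m by simp
  next
    case False thus ?thesis using m D by (simp add: powr_power powr_one)
  qed
  finally show ?thesis .
qed




theorem theorem3:
  fixes a :: "nat \<Rightarrow> real^'m" and n k :: nat and \<epsilon> :: real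
    and xh :: "nat \<Rightarrow> real" and wh :: real and sel :: "nat set \<Rightarrow> nat"
  assumes "CARD('m) \<le> k" and "k \<le> n"
    and "0 < \<epsilon>" and "\<epsilon> < 1"
    and "real k \<ge> 4 * real CARD('m) / \<epsilon> + 12 / \<epsilon>\<^sup>2 * ln (1 / \<epsilon>)"
    and "relax_optimal a n k xh wh"
    and "greedy_rule a n k sel"
  shows "(\<forall>S\<in>set_pmf (algorithm_output n k \<epsilon> xh sel). S \<subseteq> {1..n} \<and> card S = k) \<and>
    (measure_pmf.expectation (algorithm_output n k \<epsilon> xh sel) (\<lambda>S. det (gram a S)))
        powr (1 / real CARD('m)) \<ge> (1 - \<epsilon>) * wstar a n k"
proof -
  note mk = assms(1) and kn = assms(2) and e0 = assms(3) and e1 = assms(4) and kb = assms(5)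
  note opt = assms(6) and gr = assms(7)
  define m where "m = CARD('m)"
  define N where "N = {1..n}"
  define c where "c = 1 + \<epsilon>"
  define p where "p i = xh i / c" for i
  have m0: "0 < m" unfolding m_def by simp
  have c1: "1 < c" using e0 by (simp add: c_def)
  have feas: "relax_feasible a n k xh wh" using opt by (simp add: relax_optimal_def)
  have xb: "0 \<le> xh i \<and> xh i \<le> 1" if "i \<in> N" for i using feas that by (simp add: relax_feasible_def N_def)
  have xs: "(\<Sum>i\<in>N. xh i) = real k" using feas by (simp add: relax_feasible_def N_def)
  define D where "D = det (\<Sum>i\<in>N. xh i *\<^sub>R outer (a i))"
  have whD: "wh \<le> D powr (1 / real m)" using feas by (simp add: relax_feasible_def N_def D_def m_def)
  have pb: "0 \<le> p i \<and> p i \<le> 1" "p i < 1" if "i \<in> N" for i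
    using xb[OF that] c1 by (auto simp: p_def field_simps)
  define P where "P = indep_sample n p"
  define A where "A = {S::nat set. card S \<le> k}"
  have setP: "set_pmf P \<subseteq> Pow N" unfolding P_def N_def by (rule set_indep)
  have ne: "set_pmf P \<inter> A \<noteq> {}"
  proof -
    let ?Pi = "Pi_pmf N False (\<lambda>i. bernoulli_pmf (p i))"
    have "pmf ?Pi (\<lambda>_. False) = (\<Prod>i\<in>N. pmf (bernoulli_pmf (p i)) False)"
      by (rule pmf_Pi') (auto simp: N_def)
    also have "\<dots> = (\<Prod>i\<in>N. 1 - p i)" by (rule prod.cong) (use pb in auto)
    also have "\<dots> > 0" by (rule prod_pos) (use pb in auto)
    finally have "(\<lambda>_. False) \<in> set_pmf ?Pi" by (simp add: set_pmf_iff)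
    hence "{i. (\<lambda>_. False) i} \<in> set_pmf P" unfolding P_def indep_sample_def N_def by auto
    thus ?thesis by (auto simp: A_def)
  qed
  define Q where "Q = cond_pmf P A"
  have setQ: "set_pmf Q = set_pmf P \<inter> A" unfolding Q_def using ne by simp
  have out: "algorithm_output n k \<epsilon> xh sel = map_pmf (greedy_complete sel k) Q"
    proof -
    have "p = (\<lambda>i. xh i / (1 + \<epsilon>))" by (simp add: fun_eq_iff p_def c_def)
    thus ?thesis by (simp add: algorithm_output_def rejection_sample_def Q_def P_def A_def)
  qed
  have gok: "greedy_complete sel k S \<subseteq> N \<and> card (greedy_complete sel k S) = k \<and> S \<subseteq> greedy_complete sel k S"
    if "S \<in> Pow N" "card S \<le> k" for S
    using greedy_ok[OF gr, of S] that by (auto simp: N_def)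
  have part1: "\<forall>S\<in>set_pmf (algorithm_output n k \<epsilon> xh sel). S \<subseteq> {1..n} \<and> card S = k"
  proof
    fix S assume "S \<in> set_pmf (algorithm_output n k \<epsilon> xh sel)"
    then obtain S0 where S0: "S0 \<in> set_pmf Q" "S = greedy_complete sel k S0" unfolding out by auto
    hence "S0 \<in> Pow N" "card S0 \<le> k" using setQ setP by (auto simp: A_def)
    thus "S \<subseteq> {1..n} \<and> card S = k" using gok S0(2) by (auto simp: N_def)
  qed
  define Tm where "Tm = {T. T \<subseteq> N \<and> card T = m}"
  have finN: "finite N" by (simp add: N_def)
  have finTm: "finite Tm" unfolding Tm_def using finN by (auto intro: finite_subset[of _ "Pow N"])
  have Cnn: "Cc a T \<ge> 0" if "T \<in> Tm" for T
    using that finN by (intro Cc_nonneg) (auto simp: Tm_def intro: finite_subset)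
  have detgram: "det (gram a S) = (\<Sum>T\<in>Tm. if T \<subseteq> S then Cc a T else 0)" if "S \<in> Pow N" for S
  proof -
    have fS: "finite S" using that finN by (auto intro: finite_subset)
    have "det (gram a S) = (\<Sum>T\<in>{T. T \<subseteq> S \<and> card T = m}. Cc a T)"
      using gram_CB[OF fS, of a] by (simp add: m_def)
    also have "\<dots> = (\<Sum>T\<in>{T\<in>Tm. T \<subseteq> S}. Cc a T)"
      by (rule sum.cong) (use that in \<open>auto simp: Tm_def\<close>)
    also have "\<dots> = (\<Sum>T\<in>Tm. if T \<subseteq> S then Cc a T else 0)"
      by (rule sum.inter_filter) (rule finTm)
    finally show ?thesis .
  qed
  have detmono: "det (gram a S) \<le> det (gram a S')" if "S \<subseteq> S'" "S' \<in> Pow N" for S S'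
  proof -
    have "S \<in> Pow N" using that by auto
    thus ?thesis unfolding detgram[OF \<open>S \<in> Pow N\<close>] detgram[OF that(2)]
      by (intro sum_mono) (use that Cnn in auto)
  qed
  have detnn: "det (gram a S) \<ge> 0" if "S \<in> Pow N" for S
    unfolding detgram[OF that] by (intro sum_nonneg) (use Cnn in auto)
  define psi where "psi (T::nat set) (S::nat set) = (if T \<subseteq> S then (1::real) else 0) - (if T \<subseteq> S then c ^ card (S - T) else 0) / c ^ (k - m)" for T S
  have pw: "(if card S \<le> k then det (gram a S) else 0) \<ge> (\<Sum>T\<in>Tm. Cc a T * psi T S)" if "S \<in> Pow N" for S
  proof (cases "card S \<le> k")
    case True
    have "(\<Sum>T\<in>Tm. Cc a T * psi T S) \<le> (\<Sum>T\<in>Tm. if T \<subseteq> S then Cc a T else 0)"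
    proof (intro sum_mono)
      fix T assume T: "T \<in> Tm"
      have "psi T S \<le> (if T \<subseteq> S then 1 else 0)" using c1 by (simp add: psi_def)
      hence "Cc a T * psi T S \<le> Cc a T * (if T \<subseteq> S then 1 else 0)" using Cnn[OF T] by (rule mult_left_mono)
      thus "Cc a T * psi T S \<le> (if T \<subseteq> S then Cc a T else 0)" by (simp split: if_splits)
    qed
    thus ?thesis using True detgram[OF that] by simp
  next
    case False
    have "(\<Sum>T\<in>Tm. Cc a T * psi T S) \<le> 0"
    proof (intro sum_nonpos)
      fix T assume T: "T \<in> Tm"
      have "psi T S \<le> 0"
      proof (cases "T \<subseteq> S")
        case True
        have fS: "finite S" using that finN by (auto intro: finite_subset)
        have "card (S - T) = card S - m" using True T fS by (simp add: card_Diff_subset Tm_def finite_subset)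
        hence "k - m \<le> card (S - T)" using False by simp
        hence "c ^ (k - m) \<le> c ^ card (S - T)" using c1 by (intro power_increasing) auto
        thus ?thesis using True c1 by (simp add: psi_def)
      qed (simp add: psi_def)
      thus "Cc a T * psi T S \<le> 0" using Cnn[OF T] by (simp add: mult_nonneg_nonpos)
    qed
    thus ?thesis using False by simp
  qed
  have pmfP0: "pmf P S \<ge> 0" for S by simp
  have mu: "0 < measure_pmf.prob P A" "measure_pmf.prob P A \<le> 1"
    using ne measure_pmf_posI[of _ P A] by (auto simp: measure_pmf.prob_le_1)
  define E where "E = measure_pmf.expectation (algorithm_output n k \<epsilon> xh sel) (\<lambda>S. det (gram a S))"
  have "E = measure_pmf.expectation Q (\<lambda>S. det (gram a (greedy_complete sel k S)))"
    by (simp add: E_def out)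
  also have "\<dots> = (\<Sum>S\<in>Pow N. det (gram a (greedy_complete sel k S)) * pmf Q S)"
    by (rule integral_measure_pmf_real) (use setQ setP finN in auto)
  finally have E1: "E = (\<Sum>S\<in>Pow N. det (gram a (greedy_complete sel k S)) * pmf Q S)" .
  have E2: "(\<Sum>S\<in>Pow N. (if card S \<le> k then det (gram a S) else 0) * pmf P S) \<le> E"
    unfolding E1
  proof (intro sum_mono)
    fix S assume S: "S \<in> Pow N"
    show "(if card S \<le> k then det (gram a S) else 0) * pmf P S \<le> det (gram a (greedy_complete sel k S)) * pmf Q S"
    proof (cases "card S \<le> k")
      case True
      have pq: "pmf Q S = pmf P S / measure_pmf.prob P A" unfolding Q_def using ne True by (simp add: pmf_cond A_def)
      have "pmf P S \<le> pmf Q S" unfolding pq using mu by (simp add: divide_simps mult_left_le)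
      moreover have "det (gram a S) \<le> det (gram a (greedy_complete sel k S))"
        using gok[OF S True] by (intro detmono) auto
      ultimately show ?thesis using True detnn[OF S] by (simp add: mult_mono)
    next
      case False
      have "pmf Q S = 0" unfolding Q_def using ne False by (simp add: pmf_cond A_def)
      thus ?thesis using False by simp
    qed
  qed
  have E3: "(\<Sum>S\<in>Pow N. (\<Sum>T\<in>Tm. Cc a T * psi T S) * pmf P S) \<le> (\<Sum>S\<in>Pow N. (if card S \<le> k then det (gram a S) else 0) * pmf P S)"
    by (intro sum_mono mult_right_mono pw) auto
  have E4: "(\<Sum>S\<in>Pow N. (\<Sum>T\<in>Tm. Cc a T * psi T S) * pmf P S) = (\<Sum>T\<in>Tm. Cc a T * (\<Sum>S\<in>Pow N. psi T S * pmf P S))"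
    by (simp add: sum_distrib_right sum_distrib_left mult.assoc sum.swap[of _ "Pow N"])
  have EP: "measure_pmf.expectation P h = (\<Sum>S\<in>Pow N. h S * pmf P S)" for h
    by (rule integral_measure_pmf_real) (use setP finN in auto)
  have sump: "(\<Sum>i\<in>N. p i) = real k / c" using xs by (simp add: p_def sum_divide_distrib[symmetric])
  have chern: "exp (\<epsilon> * k / (1 + \<epsilon>)) / (1 + \<epsilon>) ^ (k - m) \<le> \<epsilon>^2"
    using chernoff_num[OF e0 e1, of m k] mk kb by (simp add: m_def)
  have E5: "(\<Sum>S\<in>Pow N. psi T S * pmf P S) \<ge> (1 - \<epsilon>^2) * (\<Prod>i\<in>T. p i)" if T: "T \<in> Tm" for T
  proof -
    have TN: "T \<subseteq> {1..n}" using T by (simp add: Tm_def N_def)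
    have pb': "\<And>i. i \<in> {1..n} \<Longrightarrow> 0 \<le> p i \<and> p i \<le> 1" using pb by (simp add: N_def)
    have h1: "measure_pmf.expectation P (\<lambda>S. if T \<subseteq> S then 1 ^ card (S - T) else 0) = (\<Prod>i\<in>T. p i)"
      using E_indep[of T n p 1, OF TN pb'] by (simp add: P_def)
    have e1: "(\<Sum>S\<in>Pow N. (if T \<subseteq> S then 1 else 0) * pmf P S) = (\<Prod>i\<in>T. p i)"
      using h1 unfolding EP power_one .
    have hc: "measure_pmf.expectation P (\<lambda>S. if T \<subseteq> S then c ^ card (S - T) else 0)
        = (\<Prod>i\<in>T. p i) * (\<Prod>i\<in>N - T. c * p i + (1 - p i))"
      using E_indep[of T n p c, OF TN pb'] c1 by (simp add: P_def N_def)
    have ec: "(\<Sum>S\<in>Pow N. (if T \<subseteq> S then c ^ card (S - T) else 0) * pmf P S)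
        = (\<Prod>i\<in>T. p i) * (\<Prod>i\<in>N - T. c * p i + (1 - p i))"
      using hc unfolding EP .
    have "(\<Prod>i\<in>N - T. c * p i + (1 - p i)) \<le> (\<Prod>i\<in>N - T. exp (\<epsilon> * p i))"
    proof (rule prod_mono)
      fix i assume i: "i \<in> N - T"
      have "c * p i + (1 - p i) = 1 + \<epsilon> * p i" by (simp add: c_def algebra_simps)
      show "0 \<le> c * p i + (1 - p i) \<and> c * p i + (1 - p i) \<le> exp (\<epsilon> * p i)"
      proof -
        have "0 \<le> \<epsilon> * p i" using pb[of i] i e0 by simp
        moreover have "1 + \<epsilon> * p i \<le> exp (\<epsilon> * p i)" by (rule exp_ge_add_one_self)
        ultimately show ?thesis using \<open>c * p i + (1 - p i) = 1 + \<epsilon> * p i\<close> by linarith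
      qed
    qed
    also have "\<dots> = exp (\<Sum>i\<in>N - T. \<epsilon> * p i)" using finN by (simp add: exp_sum)
    also have "\<dots> \<le> exp (\<Sum>i\<in>N. \<epsilon> * p i)"
      by (subst exp_le_cancel_iff, rule sum_mono2) (use finN pb e0 in auto)
    also have "(\<Sum>i\<in>N. \<epsilon> * p i) = \<epsilon> * k / (1 + \<epsilon>)" by (simp add: sum_distrib_left[symmetric] sump c_def)
    finally have pr: "(\<Prod>i\<in>N - T. c * p i + (1 - p i)) / c ^ (k - m) \<le> \<epsilon>^2"
      using chern c1 by (simp add: c_def divide_right_mono order_trans[OF divide_right_mono])
    have pT: "(\<Prod>i\<in>T. p i) \<ge> 0" using T pb by (intro prod_nonneg) (auto simp: Tm_def)
    have "(\<Sum>S\<in>Pow N. psi T S * pmf P S) = (\<Sum>S\<in>Pow N. (if T \<subseteq> S then 1 else 0) * pmf P S)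
        - (\<Sum>S\<in>Pow N. (if T \<subseteq> S then c ^ card (S - T) else 0) * pmf P S) / c ^ (k - m)"
      by (simp add: psi_def left_diff_distrib sum_subtractf sum_divide_distrib)
    also have "\<dots> = (\<Prod>i\<in>T. p i) - (\<Prod>i\<in>T. p i) * ((\<Prod>i\<in>N - T. c * p i + (1 - p i)) / c ^ (k - m))"
      unfolding e1 ec by simp
    also have "\<dots> \<ge> (\<Prod>i\<in>T. p i) - (\<Prod>i\<in>T. p i) * \<epsilon>^2"
      using pr pT by (intro diff_left_mono mult_left_mono) auto
    finally show ?thesis by (simp add: algebra_simps)
  qed
  have pT0: "(\<Prod>i\<in>T. p i) \<ge> 0" if "T \<in> Tm" for T
    using that pb by (intro prod_nonneg) (auto simp: Tm_def)
  have E6: "(1 - \<epsilon>^2) * (\<Sum>T\<in>Tm. Cc a T * (\<Prod>i\<in>T. p i)) \<le> (\<Sum>T\<in>Tm. Cc a T * (\<Sum>S\<in>Pow N. psi T S * pmf P S))"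
  proof -
    have "(1 - \<epsilon>^2) * (\<Sum>T\<in>Tm. Cc a T * (\<Prod>i\<in>T. p i)) = (\<Sum>T\<in>Tm. Cc a T * ((1 - \<epsilon>^2) * (\<Prod>i\<in>T. p i)))"
      by (simp add: sum_distrib_left mult.left_commute)
    also have "\<dots> \<le> (\<Sum>T\<in>Tm. Cc a T * (\<Sum>S\<in>Pow N. psi T S * pmf P S))"
      by (intro sum_mono mult_left_mono E5 Cnn)
    finally show ?thesis .
  qed
  have CBx: "det (\<Sum>i\<in>N. y i *\<^sub>R outer (a i)) = (\<Sum>T\<in>Tm. Cc a T * (\<Prod>i\<in>T. y i))" for y
    using CB[OF finN, of y a] by (simp add: Tm_def m_def mult.commute)
  have Dnn: "D \<ge> 0" unfolding D_def CBx
    by (intro sum_nonneg mult_nonneg_nonneg Cnn prod_nonneg) (use xb in \<open>auto simp: Tm_def\<close>)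
  have E7: "(\<Sum>T\<in>Tm. Cc a T * (\<Prod>i\<in>T. p i)) = D / c ^ m"
  proof -
    have "(\<Sum>T\<in>Tm. Cc a T * (\<Prod>i\<in>T. p i)) = (\<Sum>T\<in>Tm. Cc a T * (\<Prod>i\<in>T. xh i) / c ^ m)"
      by (rule sum.cong) (auto simp: p_def prod_dividef Tm_def)
    thus ?thesis unfolding D_def CBx by (simp add: sum_divide_distrib)
  qed
  have Elow: "(1 - \<epsilon>^2) * (D / c ^ m) \<le> E"
    using E2 E3 E4 E6[unfolded E7] by linarith
  define WS where "WS = {dobj a S | S. S \<subseteq> {1..n} \<and> card S = k}"
  have WSfin: "finite WS" unfolding WS_def
    by (rule finite_subset[of _ "(\<lambda>S. dobj a S) ` Pow {1..n}"]) auto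
  have "{1..k} \<subseteq> {1..n} \<and> card {1..k} = k" using kn by simp
  hence WSne: "WS \<noteq> {}" unfolding WS_def by blast
  have "wstar a n k \<in> WS" unfolding wstar_def WS_def[symmetric] using WSfin WSne by (rule Max_in)
  then obtain Ss where Ss: "Ss \<subseteq> {1..n}" "card Ss = k" "wstar a n k = dobj a Ss" unfolding WS_def by blast
  have ws0: "wstar a n k \<ge> 0" using Ss(3) by (simp add: dobj_def)
  have "relax_feasible a n k (\<lambda>i. if i \<in> Ss then 1 else 0) (dobj a Ss)"
  proof -
    have "(\<Sum>i\<in>{1..n}. (if i \<in> Ss then 1 else 0) *\<^sub>R outer (a i)) = gram a Ss"
    proof -
      have "(\<Sum>i\<in>{1..n}. (if i \<in> Ss then 1 else 0) *\<^sub>R outer (a i)) = (\<Sum>i\<in>{1..n}. if i \<in> Ss then outer (a i) else 0)"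
        by (rule sum.cong) auto
      also have "\<dots> = (\<Sum>i\<in>{1..n} \<inter> Ss. outer (a i))" by (rule sum.inter_restrict[symmetric]) simp
      also have "{1..n} \<inter> Ss = Ss" using Ss(1) by blast
      finally show ?thesis unfolding gram_def .
    qed
    moreover have "(\<Sum>i\<in>{1..n}. (if i \<in> Ss then 1 else 0::real)) = real k"
      using Ss by (simp add: sum.If_cases Int_absorb1)
    ultimately show ?thesis by (simp add: relax_feasible_def dobj_def)
  qed
  hence wsw: "wstar a n k \<le> wh" using opt Ss(3) by (simp add: relax_optimal_def)
  have wh0: "wh \<ge> 0" using ws0 wsw by linarith
  have whm: "wh ^ m \<le> D" by (rule pow_le_of_powr[OF wh0 Dnn m0 whD])
  define W where "W = (1 - \<epsilon>) * wstar a n k"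
  have W0: "W \<ge> 0" using e1 ws0 by (simp add: W_def)
  have "W ^ m = (1 - \<epsilon>) ^ m * wstar a n k ^ m" by (simp add: W_def power_mult_distrib)
  also have "\<dots> \<le> (1 - \<epsilon>) ^ m * D"
    using e1 ws0 wsw whm by (intro mult_left_mono order_trans[OF power_mono[OF wsw ws0] whm]) auto
  also have "(1 - \<epsilon>) ^ m * D = (1 - \<epsilon>^2) ^ m * (D / c ^ m)"
    using c1 by (simp add: c_def power2_eq_square field_simps power_mult_distrib[symmetric])
  also have "\<dots> \<le> (1 - \<epsilon>^2) * (D / c ^ m)"
  proof (rule mult_right_mono)
    have "0 \<le> 1 - \<epsilon>^2" "1 - \<epsilon>^2 \<le> 1" using e0 e1 by (auto simp: power2_eq_square mult_le_one)
    thus "(1 - \<epsilon>^2) ^ m \<le> 1 - \<epsilon>^2" using power_decreasing[of 1 m "1 - \<epsilon>^2"] m0 by simp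
    show "0 \<le> D / c ^ m" using Dnn c1 by simp
  qed
  also have "\<dots> \<le> E" by (rule Elow)
  finally have WE: "W ^ m \<le> E" .
  have "W = (W ^ m) powr (1 / real m)" using rootpow[OF W0 m0] by simp
  also have "\<dots> \<le> E powr (1 / real m)" using WE W0 by (intro powr_mono2) auto
  finally show ?thesis using part1 by (simp add: W_def E_def m_def)
qed

end
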